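(* Let $R$ be a commutative ring which is free as an abelian group with $\mathbb{Z}$-basis $V$, let $n\ge2$, $p$ a prime, and let $\mathfrak{g}=\mathfrak{sl}_n(\mathbb{F}_p[V])$. Then the first Lie algebra homology of $\mathrm{gr}_*(\Gamma(SL_n(R),p))$ is $$H_1(\mathrm{gr}_*(\Gamma(SL_n(R),p)))=(\mathfrak{g}\otimes_{\mathbb{F}_p}\langle t\rangle)\oplus\Big(\bigoplus_{i\ge2}H_1(\mathfrak{g})\otimes_{\mathbb{F}_p}\langle t^i\rangle\Big),$$ where $\langle t^i\rangle$ is the one-dimensional $\mathbb{F}_p$-span of $t^i$.
   Context: $\mathbb{F}_p[V]=R\otimes_{\mathbb{Z}}\mathbb{Z}/p=R/pR$; $\mathfrak{sl}_n(\mathbb{F}_p[V])$ is the Lie algebra of traceless $n\times n$ matrices over $R/pR$ with bracket $AB-BA$. For a Lie algebra $\mathfrak{h}$ over $\mathbb{F}_p$, $H_1(\mathfrak{h})=\mathfrak{h}/[\mathfrak{h},\mathfrak{h}]$. $\Gamma_r=\Gamma(SL_n(R),p^r)=\ker(SL_n(R)\to SL_n(R/p^rR))$, and $\mathrm{gr}_*(\Gamma(SL_n(R),p))=\bigoplus_{r\ge1}\Gamma_r/\Gamma_{r+1}$ (each summand an $\mathbb{F}_p$-vector space) with Lie bracket induced bilinearly by the group commutator $g^{-1}h^{-1}gh$, which maps $\Gamma_r/\Gamma_{r+1}\times\Gamma_s/\Gamma_{s+1}\to\Gamma_{r+s}/\Gamma_{r+s+1}$. *)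

theory Defs
  imports "HOL-Analysis.Determinants" "HOL-Algebra.QuotRing" "HOL-Algebra.Generated_Groups" "HOL-Computational_Algebra.Primes"
begin

definition free_Z_basis :: "'a::comm_ring_1 set \<Rightarrow> bool" where
  "free_Z_basis V \<longleftrightarrow>
     (\<forall>x. \<exists>c :: 'a \<Rightarrow> int. finite {v \<in> V. c v \<noteq> 0} \<and>
            x = (\<Sum>v\<in>{v \<in> V. c v \<noteq> 0}. of_int (c v) * v)) \<and>
     (\<forall>c :: 'a \<Rightarrow> int. finite {v \<in> V. c v \<noteq> 0} \<and>
            (\<Sum>v\<in>{v \<in> V. c v \<noteq> 0}. of_int (c v) * v) = 0 \<longrightarrow> (\<forall>v\<in>V. c v = 0))"

definition type_ring :: "'a::comm_ring_1 ring" where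
  "type_ring = \<lparr>carrier = UNIV, mult = (*), one = 1, zero = 0, add = (+)\<rparr>"

text \<open>F_p[V] = R / pR.\<close>
definition FpV :: "nat \<Rightarrow> 'a::comm_ring_1 set ring" where
  "FpV p = type_ring Quot (PIdl\<^bsub>type_ring\<^esub> (of_nat p))"

definition mat_mul_K :: "('b, 'c) ring_scheme \<Rightarrow> ('n::finite \<Rightarrow> 'n \<Rightarrow> 'b) \<Rightarrow> ('n \<Rightarrow> 'n \<Rightarrow> 'b) \<Rightarrow> ('n \<Rightarrow> 'n \<Rightarrow> 'b)" where
  "mat_mul_K K A B = (\<lambda>i j. finsum K (\<lambda>k. A i k \<otimes>\<^bsub>K\<^esub> B k j) UNIV)"

definition trace_K :: "('b, 'c) ring_scheme \<Rightarrow> ('n::finite \<Rightarrow> 'n \<Rightarrow> 'b) \<Rightarrow> 'b" where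
  "trace_K K A = finsum K (\<lambda>i. A i i) UNIV"

definition sl_K :: "('b, 'c) ring_scheme \<Rightarrow> ('n::finite \<Rightarrow> 'n \<Rightarrow> 'b) monoid" where
  "sl_K K = \<lparr>carrier = {A. (\<forall>i j. A i j \<in> carrier K) \<and> trace_K K A = \<zero>\<^bsub>K\<^esub>},
            mult = (\<lambda>A B i j. A i j \<oplus>\<^bsub>K\<^esub> B i j),
            one = (\<lambda>i j. \<zero>\<^bsub>K\<^esub>)\<rparr>"

definition lie_bracket_K :: "('b, 'c) ring_scheme \<Rightarrow> ('n::finite \<Rightarrow> 'n \<Rightarrow> 'b) \<Rightarrow> ('n \<Rightarrow> 'n \<Rightarrow> 'b) \<Rightarrow> ('n \<Rightarrow> 'n \<Rightarrow> 'b)" where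
  "lie_bracket_K K A B = (\<lambda>i j. mat_mul_K K A B i j \<ominus>\<^bsub>K\<^esub> mat_mul_K K B A i j)"

text \<open>H_1(sl_n(K)) = sl_n(K) / [sl_n(K), sl_n(K)]; over F_p the span of the brackets is
  the additive subgroup they generate.\<close>
definition H1_sl_K :: "('b, 'c) ring_scheme \<Rightarrow> ('n::finite \<Rightarrow> 'n \<Rightarrow> 'b) set monoid" where
  "H1_sl_K K = sl_K K Mod generate (sl_K K)
      {lie_bracket_K K A B | A B. A \<in> carrier (sl_K K) \<and> B \<in> carrier (sl_K K)}"

definition SL_grp :: "('a::comm_ring_1 ^ 'n ^ 'n) monoid" where
  "SL_grp = \<lparr>carrier = {A. det A = 1}, mult = (**), one = mat 1\<rparr>"

definition Gamma :: "nat \<Rightarrow> nat \<Rightarrow> ('a::comm_ring_1 ^ 'n ^ 'n) set" where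
  "Gamma p r = {A \<in> carrier SL_grp. \<forall>i j. of_nat (p ^ r) dvd (A $ i $ j - mat 1 $ i $ j)}"

definition grp_comm :: "('a::comm_ring_1 ^ 'n ^ 'n) \<Rightarrow> ('a ^ 'n ^ 'n) \<Rightarrow> ('a ^ 'n ^ 'n)" where
  "grp_comm g h = inv\<^bsub>SL_grp\<^esub> g ** inv\<^bsub>SL_grp\<^esub> h ** g ** h"

definition gr_deg :: "nat \<Rightarrow> nat \<Rightarrow> ('a::comm_ring_1 ^ 'n ^ 'n) set monoid" where
  "gr_deg p r = (SL_grp\<lparr>carrier := Gamma p r\<rparr>) Mod (Gamma p (Suc r))"

text \<open>Brackets landing in degree r: [x Gamma_(a+1), y Gamma_(b+1)] = comm(x,y) Gamma_(a+b+1), a+b=r.\<close>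
definition brackets_deg :: "nat \<Rightarrow> nat \<Rightarrow> ('a::comm_ring_1 ^ 'n ^ 'n) set set" where
  "brackets_deg p r = {Gamma p (Suc r) #>\<^bsub>SL_grp\<^esub> grp_comm x y | x y a b.
       1 \<le> a \<and> 1 \<le> b \<and> a + b = r \<and> x \<in> Gamma p a \<and> y \<in> Gamma p b}"

definition H1_gr_deg :: "nat \<Rightarrow> nat \<Rightarrow> ('a::comm_ring_1 ^ 'n ^ 'n) set set monoid" where
  "H1_gr_deg p r = gr_deg p r Mod generate (gr_deg p r) (brackets_deg p r)"

end

theory Submission
  imports Defs
begin


lemma cring_type_ring: "cring (type_ring :: 'a::comm_ring_1 ring)"
proof (rule cringI)
  show "abelian_group (type_ring :: 'a ring)"
    by (rule abelian_groupI) (auto simp: type_ring_def algebra_simps intro: exI[of _ "- _"])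
  show "comm_monoid (type_ring :: 'a ring)"
    by (rule comm_monoidI) (auto simp: type_ring_def algebra_simps)
qed (auto simp: type_ring_def algebra_simps)

lemma type_ring_simps [simp]:
  "carrier (type_ring :: 'a::comm_ring_1 ring) = UNIV"
  "x \<oplus>\<^bsub>(type_ring :: 'a ring)\<^esub> y = x + y"
  "x \<otimes>\<^bsub>(type_ring :: 'a ring)\<^esub> y = x * y"
  "\<zero>\<^bsub>(type_ring :: 'a ring)\<^esub> = 0"
  "\<one>\<^bsub>(type_ring :: 'a ring)\<^esub> = 1"
  by (simp_all add: type_ring_def)

lemma type_ring_ainv [simp]: "\<ominus>\<^bsub>(type_ring :: 'a::comm_ring_1 ring)\<^esub> x = - x"
proof -
  interpret cring "type_ring :: 'a ring" by (rule cring_type_ring)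
  have "x \<oplus>\<^bsub>type_ring\<^esub> (- x) = \<zero>\<^bsub>type_ring\<^esub>" by simp
  then show ?thesis by (metis UNIV_I type_ring_simps(1) add.inv_equality a_comm minus_equality)
qed

lemma type_ring_minus [simp]: "x \<ominus>\<^bsub>(type_ring :: 'a::comm_ring_1 ring)\<^esub> y = x - y"
  by (simp add: a_minus_def)

lemma type_ring_finsum [simp]:
  assumes "finite A"
  shows "finsum (type_ring :: 'a::comm_ring_1 ring) f A = sum f A"
  using assms
proof (induction A rule: finite_induct)
  case empty
  interpret cring "type_ring :: 'a ring" by (rule cring_type_ring)
  show ?case by simp
next
  case (insert x A)
  interpret cring "type_ring :: 'a ring" by (rule cring_type_ring)
  show ?case using insert by (simp add: finsum_insert)
qed

section \<open>The quotient F_p[V]\<close>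

definition Ip :: "nat \<Rightarrow> 'a::comm_ring_1 set" where
  "Ip p = PIdl\<^bsub>(type_ring :: 'a ring)\<^esub> (of_nat p)"

definition piq :: "nat \<Rightarrow> 'a::comm_ring_1 \<Rightarrow> 'a set" where
  "piq p x = Ip p +>\<^bsub>(type_ring :: 'a ring)\<^esub> x"

lemma ideal_Ip: "ideal (Ip p :: 'a::comm_ring_1 set) type_ring"
  unfolding Ip_def by (rule cring.cgenideal_ideal[OF cring_type_ring]) simp

lemma FpV_Ip: "FpV p = type_ring Quot Ip p"
  by (simp add: FpV_def Ip_def)

lemma cring_FpV: "cring (FpV p :: 'a::comm_ring_1 set ring)"
  unfolding FpV_Ip by (rule ideal.quotient_is_cring[OF ideal_Ip cring_type_ring])

lemma hom_piq: "ring_hom_cring (type_ring :: 'a::comm_ring_1 ring) (FpV p) (piq p)"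
  unfolding FpV_Ip piq_def[abs_def]
  by (rule ideal.rcos_ring_hom_cring[OF ideal_Ip cring_type_ring])

lemma piq_set: "piq p x = {z * of_nat p + x | z. True}"
  unfolding piq_def Ip_def a_r_coset_def' cgenideal_def by auto

lemma piq_eq_iff: "piq p x = piq p y \<longleftrightarrow> (of_nat p :: 'a::comm_ring_1) dvd (x - y)"
proof
  assume "piq p x = piq p y"
  moreover have "x \<in> piq p x" unfolding piq_set by (auto intro: exI[of _ 0])
  ultimately have "x \<in> piq p y" by simp
  then obtain z where "x = z * of_nat p + y" unfolding piq_set by auto
  then show "(of_nat p :: 'a) dvd (x - y)" by simp
next
  assume "(of_nat p :: 'a) dvd (x - y)"
  then obtain w where w: "x - y = of_nat p * w" by (auto elim: dvdE)
  have "\<And>z. z * of_nat p + x = (z + w) * of_nat p + y" "\<And>z. z * of_nat p + y = (z - w) * of_nat p + x"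
    using w by (simp_all add: algebra_simps)
  then show "piq p x = piq p y" unfolding piq_set by blast
qed

lemma carrier_FpV: "carrier (FpV p :: 'a::comm_ring_1 set ring) = range (piq p)"
  unfolding FpV_Ip FactRing_def piq_def[abs_def] A_RCOSETS_def' by auto

lemma zero_FpV: "\<zero>\<^bsub>FpV p\<^esub> = piq p (0::'a::comm_ring_1)"
  using ring_hom_cring.hom_zero[OF hom_piq, of p] by (metis type_ring_simps(4))

lemma piq_zero_iff: "piq p x = \<zero>\<^bsub>FpV p\<^esub> \<longleftrightarrow> (of_nat p :: 'a::comm_ring_1) dvd x"
  by (simp add: zero_FpV piq_eq_iff)

lemma piq_ops:
  "piq p (x + y) = piq p x \<oplus>\<^bsub>FpV p\<^esub> piq p (y::'a::comm_ring_1)"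
  "piq p (x * y) = piq p x \<otimes>\<^bsub>FpV p\<^esub> piq p y"
  "piq p (x - y) = piq p x \<ominus>\<^bsub>FpV p\<^esub> piq p y"
  "piq p (- x) = \<ominus>\<^bsub>FpV p\<^esub> piq p x"
  "piq p x \<in> carrier (FpV p)"
proof -
  interpret h: ring_hom_cring "type_ring :: 'a ring" "FpV p" "piq p" by (rule hom_piq)
  show "piq p (x + y) = piq p x \<oplus>\<^bsub>FpV p\<^esub> piq p y"
    using h.hom_add[of x y] by simp
  show "piq p (x * y) = piq p x \<otimes>\<^bsub>FpV p\<^esub> piq p y"
    using h.hom_mult[of x y] by simp
  show "piq p (- x) = \<ominus>\<^bsub>FpV p\<^esub> piq p x"
    using h.hom_a_inv[of x] by simp
  show "piq p x \<in> carrier (FpV p)" by simp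
  show "piq p (x - y) = piq p x \<ominus>\<^bsub>FpV p\<^esub> piq p y"
    using h.hom_a_inv[of y] h.hom_add[of x "-y"] by (simp add: a_minus_def)
qed

lemma piq_sum:
  "finite A \<Longrightarrow> piq p (sum f A) = finsum (FpV p) (\<lambda>i. piq p (f i :: 'a::comm_ring_1)) A"
proof -
  interpret h: ring_hom_cring "type_ring :: 'a ring" "FpV p" "piq p" by (rule hom_piq)
  assume "finite A"
  then show ?thesis using h.hom_finsum[of f A] by (simp add: comp_def)
qed




section \<open>Adjugate and the group SL\<close>

lemma det_rowrep_sum:
  fixes b :: "'n::finite \<Rightarrow> 'a::comm_ring_1 ^ 'n" and v :: "'k \<Rightarrow> 'a ^ 'n"
  assumes "finite S"
  shows "det ((\<chi> l. if l = j then (\<Sum>k\<in>S. c k *s v k) else b l) :: 'a^'n^'n)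
       = (\<Sum>k\<in>S. c k * det ((\<chi> l. if l = j then v k else b l) :: 'a^'n^'n))"
  using assms
proof (induction S rule: finite_induct)
  case empty
  show ?case using det_row_0[of j b] by (simp only: sum.empty)
next
  case (insert x S)
  have "det ((\<chi> l. if l = j then (\<Sum>k\<in>insert x S. c k *s v k) else b l) :: 'a^'n^'n)
      = det ((\<chi> l. if l = j then (\<lambda>_. c x *s v x) l + (\<lambda>_. \<Sum>k\<in>S. c k *s v k) l else b l) :: 'a^'n^'n)"
    using insert by (simp add: sum.insert cong: if_cong)
  also have "\<dots> = det ((\<chi> l. if l = j then c x *s (\<lambda>_. v x) l else b l) :: 'a^'n^'n)
      + det ((\<chi> l. if l = j then (\<Sum>k\<in>S. c k *s v k) else b l) :: 'a^'n^'n)"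
    by (subst det_row_add) simp
  also have "\<dots> = c x * det ((\<chi> l. if l = j then v x else b l) :: 'a^'n^'n)
      + (\<Sum>k\<in>S. c k * det ((\<chi> l. if l = j then v k else b l) :: 'a^'n^'n))"
    using insert det_row_mul[of j "c x" "\<lambda>_. v x" b] by simp
  finally show ?case using insert by simp
qed

lemma adj_right:
  fixes A :: "'a::comm_ring_1^'n::finite^'n"
  shows "\<exists>B. A ** B = mat (det A)"
proof -
  define B :: "'a^'n^'n" where "B = (\<chi> k j. det ((\<chi> l. if l = j then axis k 1 else A $ l) :: 'a^'n^'n))"
  have "A ** B = mat (det A)"
  unfolding vec_eq_iff
  proof (intro allI)
    fix i j
    have rowi: "(\<Sum>k\<in>UNIV. A $ i $ k *s axis k (1::'a)) = A $ i"
      by (auto simp: vec_eq_iff axis_def if_distrib sum.delta' cong: if_cong)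
    have "(A ** B) $ i $ j = (\<Sum>k\<in>UNIV. A $ i $ k * det ((\<chi> l. if l = j then axis k 1 else A $ l) :: 'a^'n^'n))"
      by (simp add: matrix_matrix_mult_def B_def)
    also have "\<dots> = det ((\<chi> l. if l = j then (\<Sum>k\<in>UNIV. A $ i $ k *s axis k (1::'a)) else A $ l) :: 'a^'n^'n)"
      by (rule det_rowrep_sum[symmetric]) simp
    also have "\<dots> = det ((\<chi> l. if l = j then A $ i else A $ l) :: 'a^'n^'n)"
      by (simp only: rowi)
    also have "\<dots> = mat (det A) $ i $ j"
    proof (cases "i = j")
      case True
      have "((\<chi> l. if l = j then A $ i else A $ l) :: 'a^'n^'n) = A"
        using True by (simp add: vec_eq_iff)
      then show ?thesis using True by (simp add: mat_def)
    next
      case False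
      have "det ((\<chi> l. if l = j then A $ i else A $ l) :: 'a^'n^'n) = 0"
        by (rule det_identical_rows[OF False]) (simp add: row_def vec_eq_iff)
      then show ?thesis using False by (simp add: mat_def)
    qed
    finally show "(A ** B) $ i $ j = mat (det A) $ i $ j" .
  qed
  then show ?thesis by blast
qed

lemma adj_left:
  fixes A :: "'a::comm_ring_1^'n::finite^'n"
  shows "\<exists>B. B ** A = mat (det A)"
proof -
  obtain B where "transpose A ** B = mat (det (transpose A))" using adj_right by blast
  then have "transpose (transpose A ** B) = mat (det A)" by simp
  then show ?thesis by (auto simp: matrix_transpose_mul)
qed

lemma SL_simps [simp]:
  "carrier (SL_grp :: ('a::comm_ring_1^'n::finite^'n) monoid) = {A. det A = 1}"
  "x \<otimes>\<^bsub>(SL_grp :: ('a::comm_ring_1^'n::finite^'n) monoid)\<^esub> y = x ** y"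
  "\<one>\<^bsub>(SL_grp :: ('a::comm_ring_1^'n::finite^'n) monoid)\<^esub> = mat 1"
  by (simp_all add: SL_grp_def)

lemma group_SL: "group (SL_grp :: ('a::comm_ring_1^'n::finite^'n) monoid)"
proof (rule groupI)
  fix x :: "'a^'n^'n" assume x: "x \<in> carrier SL_grp"
  obtain B where B: "B ** x = mat (det x)" using adj_left by blast
  then have "B ** x = mat 1" using x by simp
  moreover then have "det B = 1" using x det_mul[of B x] by simp
  ultimately show "\<exists>y\<in>carrier SL_grp. y \<otimes>\<^bsub>SL_grp\<^esub> x = \<one>\<^bsub>SL_grp\<^esub>" by auto
qed (auto simp: det_mul matrix_mul_assoc)

lemma SL_inv:
  assumes "det (x :: 'a::comm_ring_1^'n::finite^'n) = 1"
  shows "inv\<^bsub>SL_grp\<^esub> x ** x = mat 1" "x ** inv\<^bsub>SL_grp\<^esub> x = mat 1" "det (inv\<^bsub>SL_grp\<^esub> x) = 1"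
proof -
  interpret group "SL_grp :: ('a^'n^'n) monoid" by (rule group_SL)
  have "x \<in> carrier SL_grp" using assms by simp
  from l_inv[OF this] r_inv[OF this] inv_closed[OF this]
  show "inv\<^bsub>SL_grp\<^esub> x ** x = mat 1" "x ** inv\<^bsub>SL_grp\<^esub> x = mat 1" "det (inv\<^bsub>SL_grp\<^esub> x) = 1"
    by simp_all
qed

definition mdvd :: "'a::comm_ring_1 \<Rightarrow> 'a^'n::finite^'n \<Rightarrow> bool" where
  "mdvd e M \<longleftrightarrow> (\<forall>i j. e dvd M $ i $ j)"

lemma mdvd_mult: "mdvd e X \<Longrightarrow> mdvd f Y \<Longrightarrow> mdvd (e * f) (X ** Y)"
  unfolding mdvd_def matrix_matrix_mult_def by (auto intro!: dvd_sum mult_dvd_mono)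

lemma mdvd_multL: "mdvd e X \<Longrightarrow> mdvd e (X ** Y)"
  using mdvd_mult[of e X 1 Y] by (simp add: mdvd_def)

lemma mdvd_multR: "mdvd e Y \<Longrightarrow> mdvd e (X ** Y)"
  using mdvd_mult[of 1 X e Y] by (simp add: mdvd_def)

lemma mdvd_add: "mdvd e X \<Longrightarrow> mdvd e Y \<Longrightarrow> mdvd e (X + Y)"
  and mdvd_diff: "mdvd e X \<Longrightarrow> mdvd e Y \<Longrightarrow> mdvd e (X - Y)"
  and mdvd_uminus: "mdvd e X \<Longrightarrow> mdvd e (- X)"
  and mdvd_zero: "mdvd e 0"
  unfolding mdvd_def by auto

lemma mdvd_trans: "mdvd e X \<Longrightarrow> f dvd e \<Longrightarrow> mdvd f X"
  unfolding mdvd_def by (meson dvd_trans)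

lemma matrix_sub_ldistrib: "(A::'a::comm_ring_1^'n::finite^'n) ** (B - C) = A ** B - A ** C"
  by (simp add: matrix_matrix_mult_def vec_eq_iff algebra_simps sum_subtractf)

lemma matrix_sub_rdistrib: "((B::'a::comm_ring_1^'n::finite^'n) - C) ** A = B ** A - C ** A"
  by (simp add: matrix_matrix_mult_def vec_eq_iff algebra_simps sum_subtractf)

lemma matrix_add_rdistrib: "((B::'a::comm_ring_1^'n::finite^'n) + C) ** A = B ** A + C ** A"
  by (simp add: matrix_matrix_mult_def vec_eq_iff algebra_simps sum.distrib)

lemma prod_minus_one:
  fixes A B :: "'a::comm_ring_1^'n::finite^'n"
  shows "A ** B - mat 1 = (A - mat 1) ** (B - mat 1) + (A - mat 1) + (B - mat 1)"
  by (simp add: matrix_sub_ldistrib matrix_sub_rdistrib matrix_add_ldistrib algebra_simps)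

section \<open>Congruence subgroups\<close>

lemma Gamma_iff:
  "A \<in> Gamma p r \<longleftrightarrow> det A = 1 \<and> mdvd ((of_nat p :: 'a::comm_ring_1) ^ r) (A - mat 1)"
  by (simp add: Gamma_def mdvd_def of_nat_power)

lemma Gamma_mult:
  assumes "A \<in> Gamma p r" "B \<in> Gamma p r"
  shows "A ** B \<in> Gamma p r"
proof -
  let ?e = "(of_nat p :: 'a::comm_ring_1) ^ r"
  have "mdvd ?e ((A - mat 1) ** (B - mat 1))"
    using assms by (auto simp: Gamma_iff intro: mdvd_multL)
  then have "mdvd ?e ((A - mat 1) ** (B - mat 1) + (A - mat 1) + (B - mat 1))" using assms
    unfolding Gamma_iff by (blast intro: mdvd_add)
  then have "mdvd ?e (A ** B - mat 1)" by (simp only: prod_minus_one)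
  then show ?thesis using assms by (auto simp: Gamma_iff det_mul)
qed

lemma Gamma_inv:
  assumes "A \<in> Gamma p r"
  shows "inv\<^bsub>SL_grp\<^esub> A \<in> Gamma p r"
proof -
  let ?B = "inv\<^bsub>SL_grp\<^esub> A"
  have dA: "det A = 1" using assms by (simp add: Gamma_iff)
  have "?B - mat 1 = - (?B ** (A - mat 1))"
    using SL_inv[OF dA] by (simp add: matrix_sub_ldistrib)
  then show ?thesis using assms SL_inv[OF dA]
    by (auto simp: Gamma_iff intro!: mdvd_uminus mdvd_multR)
qed

lemma Gamma_one: "mat 1 \<in> Gamma p r"
  by (simp add: Gamma_iff mdvd_def)

lemma Gamma_mono: "r \<le> s \<Longrightarrow> Gamma p s \<subseteq> Gamma p r"
  by (auto simp: Gamma_iff intro: mdvd_trans[OF _ le_imp_power_dvd])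

lemma subgroup_Gamma: "subgroup (Gamma p r) (SL_grp :: ('a::comm_ring_1^'n::finite^'n) monoid)"
proof -
  interpret group "SL_grp :: ('a^'n^'n) monoid" by (rule group_SL)
  show ?thesis
  proof (rule subgroupI)
    show "Gamma p r \<subseteq> carrier SL_grp" by (auto simp: Gamma_iff)
    show "Gamma p r \<noteq> {}" using Gamma_one by blast
  qed (auto intro: Gamma_mult Gamma_inv)
qed

lemma group_Gr: "group ((SL_grp :: ('a::comm_ring_1^'n::finite^'n) monoid)\<lparr>carrier := Gamma p r\<rparr>)"
  by (rule subgroup.subgroup_is_group[OF subgroup_Gamma group_SL])




lemma free_cancel:
  fixes V :: "'a::comm_ring_1 set"
  assumes V: "free_Z_basis V" and p: "p > 0" and y: "of_nat p * y = (0::'a)"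
  shows "y = 0"
proof -
  have ex: "\<forall>x. \<exists>c :: 'a \<Rightarrow> int. finite {v \<in> V. c v \<noteq> 0} \<and>
            x = (\<Sum>v\<in>{v \<in> V. c v \<noteq> 0}. of_int (c v) * v)"
   and un: "\<forall>c :: 'a \<Rightarrow> int. finite {v \<in> V. c v \<noteq> 0} \<and>
            (\<Sum>v\<in>{v \<in> V. c v \<noteq> 0}. of_int (c v) * v) = 0 \<longrightarrow> (\<forall>v\<in>V. c v = 0)"
    using V unfolding free_Z_basis_def by blast+
  obtain c where fin: "finite {v \<in> V. c v \<noteq> 0}" and yc: "y = (\<Sum>v\<in>{v \<in> V. c v \<noteq> 0}. of_int (c v) * v)"
    using ex by blast
  define c' where "c' v = int p * c v" for v
  have S: "{v \<in> V. c' v \<noteq> 0} = {v \<in> V. c v \<noteq> 0}" using p by (auto simp: c'_def)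
  have "(\<Sum>v\<in>{v \<in> V. c' v \<noteq> 0}. of_int (c' v) * v) = (\<Sum>v\<in>{v \<in> V. c v \<noteq> 0}. of_nat p * (of_int (c v) * v))"
    unfolding S by (simp add: c'_def mult.assoc)
  also have "\<dots> = of_nat p * y" unfolding yc by (simp add: sum_distrib_left)
  also have "\<dots> = 0" by (rule y)
  finally have z: "(\<Sum>v\<in>{v \<in> V. c' v \<noteq> 0}. of_int (c' v) * v) = 0" .
  have fin': "finite {v \<in> V. c' v \<noteq> 0}" using fin S by simp
  have "\<forall>v\<in>V. c' v = 0" using un fin' z by blast
  then have "{v \<in> V. c v \<noteq> 0} = {}" using p by (auto simp: c'_def)
  then show ?thesis using yc by simp
qed

locale ctx =
  fixes p :: nat and q :: "'a::comm_ring_1"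
  assumes q_def: "q = of_nat p"
    and canc: "q * y = 0 \<Longrightarrow> y = 0"
begin

lemma canc_pow: "q ^ k * y = q ^ k * z \<Longrightarrow> y = z"
proof (induction k arbitrary: y z)
  case 0 then show ?case by simp
next
  case (Suc k)
  have "q * (q ^ k * y - q ^ k * z) = 0" using Suc.prems by (simp add: algebra_simps)
  then have "q ^ k * y - q ^ k * z = 0" by (rule canc)
  then have "q ^ k * y = q ^ k * z" by simp
  then show ?case using Suc.IH by blast
qed

lemma dvd_cancel: "q ^ k * y = q ^ k * z + q ^ (Suc k) * w \<Longrightarrow> y = z + q * w"
  by (rule canc_pow[of k]) (simp add: algebra_simps)

end

definition smat :: "'a::comm_ring_1 \<Rightarrow> 'a^'n::finite^'n \<Rightarrow> 'a^'n^'n" where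
  "smat c X = (\<chi> i j. c * X $ i $ j)"

lemma smat_nth [simp]: "smat c X $ i $ j = c * X $ i $ j"
  by (simp add: smat_def)

lemma smat_simps:
  "smat c X ** smat d Y = smat (c * d) (X ** Y)"
  "smat c X ** Y = smat c (X ** Y)"
  "X ** smat c Y = smat c (X ** Y)"
  "smat c X + smat c Y = smat c (X + Y)"
  "smat c X - smat c Y = smat c (X - Y)"
  "smat c (smat d X) = smat (c * d) X"
  by (simp_all add: vec_eq_iff matrix_matrix_mult_def sum_distrib_left algebra_simps)

lemma mdvd_smat: "mdvd q Y \<Longrightarrow> mdvd (e * q) (smat e Y)"
  by (auto simp: mdvd_def intro: mult_dvd_mono)

lemma mdvd_smat': "mdvd e (smat e Y)"
  by (auto simp: mdvd_def)

context ctx begin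

lemma q_pow: "of_nat (p ^ r) = q ^ r"
  by (simp add: q_def of_nat_power)

lemma Gamma_iff': "A \<in> Gamma p r \<longleftrightarrow> det A = 1 \<and> mdvd (q ^ r) (A - mat 1)"
  by (simp add: Gamma_iff q_def)

lemma mdvd_ex: "mdvd e M \<longleftrightarrow> (\<exists>X. M = smat e X)"
proof
  assume "mdvd e M"
  then have "\<forall>i j. \<exists>d. M $ i $ j = e * d" unfolding mdvd_def dvd_def by auto
  then obtain d where "\<And>i j. M $ i $ j = e * d i j" by metis
  then have "M = smat e (\<chi> i j. d i j)" by (simp add: vec_eq_iff)
  then show "\<exists>X. M = smat e X" by blast
qed (auto simp: mdvd_def)

definition Dm :: "nat \<Rightarrow> 'a^'n::finite^'n \<Rightarrow> 'a^'n^'n" where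
  "Dm r A = (\<chi> i j. SOME d. (A - mat 1) $ i $ j = q ^ r * d)"

lemma smat_inj: "smat (q ^ r) X = smat (q ^ r) Y \<Longrightarrow> X = Y"
  by (auto simp: vec_eq_iff intro: canc_pow)

lemma Dm_eq:
  assumes "A - mat 1 = smat (q ^ r) X"
  shows "Dm r A = X"
proof -
  have "\<And>i j. (SOME d. (A - mat 1) $ i $ j = q ^ r * d) = X $ i $ j"
  proof -
    fix i j
    have "(A - mat 1) $ i $ j = q ^ r * X $ i $ j" using assms by simp
    then have "(A - mat 1) $ i $ j = q ^ r * (SOME d. (A - mat 1) $ i $ j = q ^ r * d)" by (rule someI)
    then show "(SOME d. (A - mat 1) $ i $ j = q ^ r * d) = X $ i $ j"
      using \<open>(A - mat 1) $ i $ j = q ^ r * X $ i $ j\<close> canc_pow by metis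
  qed
  then show ?thesis by (simp add: Dm_def vec_eq_iff)
qed

lemma Dm_Gamma:
  assumes "A \<in> Gamma p r"
  shows "A - mat 1 = smat (q ^ r) (Dm r A)"
proof -
  obtain X where h: "A - mat 1 = smat (q ^ r) X" using assms by (auto simp: Gamma_iff' mdvd_ex)
  have "Dm r A = X" by (rule Dm_eq[OF h])
  with h show ?thesis by simp
qed

lemma Gamma_form: "A \<in> Gamma p r \<Longrightarrow> A = mat 1 + smat (q ^ r) (Dm r A)"
  using Dm_Gamma[of A r] by (simp add: algebra_simps)

end

section \<open>Determinant expansion\<close>

lemma aux_rearr: "a = b + c \<Longrightarrow> (a::'a::comm_ring_1) - u - v = (b - u - v) + c"
  by simp

lemma prod_expand:
  fixes e :: "'a::comm_ring_1"
  assumes "finite S"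
  shows "e ^ 2 dvd ((\<Prod>i\<in>S. 1 + e * f i) - 1 - e * (\<Sum>i\<in>S. f i))"
  using assms
proof (induction S rule: finite_induct)
  case empty then show ?case by simp
next
  case (insert a S)
  then obtain t where t: "(\<Prod>i\<in>S. 1 + e * f i) = 1 + e * (\<Sum>i\<in>S. f i) + e ^ 2 * t"
    by (auto elim!: dvdE simp: algebra_simps)
  have "(\<Prod>i\<in>insert a S. 1 + e * f i) - 1 - e * (\<Sum>i\<in>insert a S. f i)
      = e ^ 2 * (f a * (\<Sum>i\<in>S. f i) + t + e * f a * t)"
    using insert t by (simp add: algebra_simps power2_eq_square)
  then show ?case by simp
qed

lemma det_expand:
  fixes X :: "'a::comm_ring_1^'n::finite^'n"
  shows "e ^ 2 dvd (det (mat 1 + smat e X) - 1 - e * trace X)"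
proof -
  let ?M = "mat 1 + smat e X"
  let ?P = "{\<sigma>. \<sigma> permutes (UNIV :: 'n set)}"
  let ?t = "\<lambda>\<sigma>. of_int (sign \<sigma>) * (\<Prod>i\<in>UNIV. ?M $ i $ \<sigma> i)"
  have Mii: "?M $ i $ i = 1 + e * X $ i $ i" for i by (simp add: mat_def)
  have Mij: "i \<noteq> j \<Longrightarrow> ?M $ i $ j = e * X $ i $ j" for i j by (simp add: mat_def)
  have idP: "id \<in> ?P" by (simp add: permutes_id)
  have deq: "det ?M = ?t id + sum ?t (?P - {id})"
    unfolding det_def by (subst sum.remove[OF finite_permutations[OF finite_class.finite_UNIV] idP]) (rule refl)
  have tid: "?t id = (\<Prod>i\<in>UNIV. 1 + e * X $ i $ i)"
    by (simp only: Mii sign_id of_int_1 mult_1 id_apply)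
  have d1: "e ^ 2 dvd (?t id - 1 - e * trace X)"
    unfolding tid trace_def by (rule prod_expand) simp
  have d2: "e ^ 2 dvd sum ?t (?P - {id})"
  proof (rule dvd_sum)
    fix \<sigma> assume s: "\<sigma> \<in> ?P - {id}"
    then have perm: "\<sigma> permutes UNIV" and "\<sigma> \<noteq> id" by auto
    then obtain i where i: "\<sigma> i \<noteq> i" by (metis eq_id_iff)
    let ?j = "\<sigma> i"
    have j: "\<sigma> ?j \<noteq> ?j" using i permutes_inj[OF perm] by (metis injD)
    have ij: "i \<noteq> ?j" using i by simp
    have "(\<Prod>k\<in>UNIV. ?M $ k $ \<sigma> k) = ?M $ i $ \<sigma> i * (?M $ ?j $ \<sigma> ?j * (\<Prod>k\<in>UNIV - {i} - {?j}. ?M $ k $ \<sigma> k))"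
      using ij by (simp add: prod.remove[of UNIV i] prod.remove[of "UNIV - {i}" ?j])
    moreover have "e ^ 2 dvd ?M $ i $ \<sigma> i * (?M $ ?j $ \<sigma> ?j * (\<Prod>k\<in>UNIV - {i} - {?j}. ?M $ k $ \<sigma> k))"
    proof -
      have "?M $ i $ \<sigma> i = e * X $ i $ \<sigma> i" using Mij i by metis
      moreover have "?M $ ?j $ \<sigma> ?j = e * X $ ?j $ \<sigma> ?j" using Mij j by metis
      ultimately show ?thesis unfolding dvd_def power2_eq_square
        by (intro exI[of _ "X $ i $ \<sigma> i * X $ ?j $ \<sigma> ?j * (\<Prod>k\<in>UNIV - {i} - {?j}. ?M $ k $ \<sigma> k)"]) (simp add: ac_simps)
    qed
    ultimately show "e ^ 2 dvd ?t \<sigma>" by simp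
  qed
  show ?thesis
    unfolding aux_rearr[OF deq] using d1 d2 by (rule dvd_add)
qed




lemma sl_K_simps [simp]:
  "carrier (sl_K K) = {A. (\<forall>i j. A i j \<in> carrier K) \<and> trace_K K A = \<zero>\<^bsub>K\<^esub>}"
  "A \<otimes>\<^bsub>sl_K K\<^esub> B = (\<lambda>i j. A i j \<oplus>\<^bsub>K\<^esub> B i j)"
  "\<one>\<^bsub>sl_K K\<^esub> = (\<lambda>i j. \<zero>\<^bsub>K\<^esub>)"
  by (simp_all add: sl_K_def)

lemma comm_group_sl_K:
  assumes "ring K"
  shows "comm_group (sl_K (K :: ('b, 'c) ring_scheme) :: ('n::finite \<Rightarrow> 'n \<Rightarrow> 'b) monoid)"
proof -
  interpret ring K by fact
  have tr_add: "trace_K K (\<lambda>i j. A i j \<oplus>\<^bsub>K\<^esub> B i j) = trace_K K A \<oplus>\<^bsub>K\<^esub> trace_K K B"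
    if "\<forall>i j. A i j \<in> carrier K" "\<forall>i j. B i j \<in> carrier K" for A B :: "'n \<Rightarrow> 'n \<Rightarrow> 'b"
    unfolding trace_K_def using that by (intro finsum_addf) auto
  have tr_cl: "trace_K K A \<in> carrier K" if "\<forall>i j. A i j \<in> carrier K" for A :: "'n \<Rightarrow> 'n \<Rightarrow> 'b"
    unfolding trace_K_def using that by (intro finsum_closed) auto
  have tr_0: "trace_K K (\<lambda>i j. \<zero>\<^bsub>K\<^esub>) = \<zero>\<^bsub>K\<^esub>" unfolding trace_K_def by (rule finsum_zero)
  show ?thesis
  proof (rule comm_groupI)
    fix x y :: "'n \<Rightarrow> 'n \<Rightarrow> 'b"
    assume x: "x \<in> carrier (sl_K K)" and y: "y \<in> carrier (sl_K K)"
    then show "x \<otimes>\<^bsub>sl_K K\<^esub> y \<in> carrier (sl_K K)" by (simp add: tr_add)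
    show "x \<otimes>\<^bsub>sl_K K\<^esub> y = y \<otimes>\<^bsub>sl_K K\<^esub> x" using x y by (auto simp: a_comm)
  next
    show "\<one>\<^bsub>sl_K K\<^esub> \<in> carrier (sl_K K)" by (simp add: tr_0)
  next
    fix x y z :: "'n \<Rightarrow> 'n \<Rightarrow> 'b"
    assume "x \<in> carrier (sl_K K)" "y \<in> carrier (sl_K K)" "z \<in> carrier (sl_K K)"
    then show "x \<otimes>\<^bsub>sl_K K\<^esub> y \<otimes>\<^bsub>sl_K K\<^esub> z = x \<otimes>\<^bsub>sl_K K\<^esub> (y \<otimes>\<^bsub>sl_K K\<^esub> z)"
      by (auto simp: a_assoc)
  next
    fix x :: "'n \<Rightarrow> 'n \<Rightarrow> 'b"
    assume "x \<in> carrier (sl_K K)"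
    then show "\<one>\<^bsub>sl_K K\<^esub> \<otimes>\<^bsub>sl_K K\<^esub> x = x" by auto
  next
    fix x :: "'n \<Rightarrow> 'n \<Rightarrow> 'b"
    assume x: "x \<in> carrier (sl_K K)"
    let ?y = "\<lambda>i j. \<ominus>\<^bsub>K\<^esub> x i j"
    have yc: "\<forall>i j. ?y i j \<in> carrier K" using x by auto
    have xc: "\<forall>i j. x i j \<in> carrier K" and tx: "trace_K K x = \<zero>\<^bsub>K\<^esub>" using x by auto
    have eq: "(\<lambda>i j. ?y i j \<oplus>\<^bsub>K\<^esub> x i j) = (\<lambda>i j. \<zero>\<^bsub>K\<^esub>)" using xc by (simp add: l_neg)
    have "trace_K K ?y \<oplus>\<^bsub>K\<^esub> trace_K K x = trace_K K (\<lambda>i j. ?y i j \<oplus>\<^bsub>K\<^esub> x i j)"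
      using tr_add[OF yc xc] by (rule sym)
    also have "\<dots> = \<zero>\<^bsub>K\<^esub>" unfolding eq by (rule tr_0)
    finally have "trace_K K ?y \<oplus>\<^bsub>K\<^esub> trace_K K x = \<zero>\<^bsub>K\<^esub>" .
    then have "trace_K K ?y = \<zero>\<^bsub>K\<^esub>" using tx tr_cl[OF yc] by simp
    then have "?y \<in> carrier (sl_K K)" using yc by simp
    moreover have "?y \<otimes>\<^bsub>sl_K K\<^esub> x = \<one>\<^bsub>sl_K K\<^esub>" using x by (auto simp: l_neg)
    ultimately show "\<exists>y\<in>carrier (sl_K K). y \<otimes>\<^bsub>sl_K K\<^esub> x = \<one>\<^bsub>sl_K K\<^esub>" by blast
  qed
qed

context ctx begin

lemma piq_dvd_iff: "piq p x = piq p y \<longleftrightarrow> q dvd (x - y)"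
  by (simp add: piq_eq_iff q_def)

lemma piq_zero_q: "piq p x = \<zero>\<^bsub>FpV p\<^esub> \<longleftrightarrow> q dvd x"
  by (simp add: piq_zero_iff q_def)

lemma piq_add_dvd: "q dvd w \<Longrightarrow> piq p (w + x) = piq p x"
  by (simp add: piq_dvd_iff)

definition phi :: "nat \<Rightarrow> 'a^'n::finite^'n \<Rightarrow> 'n \<Rightarrow> 'n \<Rightarrow> 'a set" where
  "phi r A = (\<lambda>i j. piq p (Dm r A $ i $ j))"

lemma q_dvd_pow: "r \<ge> 1 \<Longrightarrow> q dvd q ^ r"
  by (simp add: dvd_power)

lemma Dm_mult:
  assumes "A \<in> Gamma p r" "B \<in> Gamma p r"
  shows "Dm r (A ** B) = smat (q ^ r) (Dm r A ** Dm r B) + Dm r A + Dm r B"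
proof (rule Dm_eq)
  let ?e = "q ^ r"
  have "A ** B - mat 1 = (A - mat 1) ** (B - mat 1) + (A - mat 1) + (B - mat 1)"
    by (rule prod_minus_one)
  also have "\<dots> = smat ?e (Dm r A) ** smat ?e (Dm r B) + smat ?e (Dm r A) + smat ?e (Dm r B)"
    using Dm_Gamma[OF assms(1)] Dm_Gamma[OF assms(2)] by simp
  also have "\<dots> = smat ?e (smat ?e (Dm r A ** Dm r B) + Dm r A + Dm r B)"
    unfolding smat_simps(1) by (simp add: vec_eq_iff algebra_simps)
  finally show "A ** B - mat 1 = smat ?e (smat ?e (Dm r A ** Dm r B) + Dm r A + Dm r B)" .
qed

lemma trace_Dm:
  assumes "A \<in> Gamma p r" "r \<ge> 1"
  shows "q dvd trace (Dm r A)"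
proof -
  let ?e = "q ^ r" and ?X = "Dm r A"
  have "det (mat 1 + smat ?e ?X) = 1" using assms Gamma_form[OF assms(1)] by (simp add: Gamma_iff')
  then have "?e ^ 2 dvd (?e * trace ?X)" using det_expand[of ?e ?X] by simp
  then obtain w where "?e * trace ?X = ?e ^ 2 * w" by (auto elim: dvdE)
  then have "?e * trace ?X = ?e * (?e * w)" by (simp add: power2_eq_square algebra_simps)
  then have "trace ?X = ?e * w" by (rule canc_pow)
  then show ?thesis using q_dvd_pow[OF assms(2)] by simp
qed

lemma phi_carrier:
  assumes "A \<in> Gamma p r" "r \<ge> 1"
  shows "phi r A \<in> carrier (sl_K (FpV p))"
proof -
  have "trace_K (FpV p) (phi r A) = piq p (trace (Dm r A))"
    unfolding trace_K_def phi_def trace_def by (simp add: piq_sum)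
  also have "\<dots> = \<zero>\<^bsub>FpV p\<^esub>" using trace_Dm[OF assms] by (simp add: piq_zero_iff q_def)
  finally show ?thesis by (simp add: phi_def piq_ops)
qed

lemma phi_mult:
  assumes "A \<in> Gamma p r" "B \<in> Gamma p r" "r \<ge> 1"
  shows "phi r (A ** B) = phi r A \<otimes>\<^bsub>sl_K (FpV p)\<^esub> phi r B"
proof -
  have "phi r (A ** B) i j = piq p (Dm r A $ i $ j) \<oplus>\<^bsub>FpV p\<^esub> piq p (Dm r B $ i $ j)" for i j
  proof -
    have "phi r (A ** B) i j = piq p (q ^ r * (Dm r A ** Dm r B) $ i $ j + (Dm r A $ i $ j + Dm r B $ i $ j))"
      unfolding phi_def Dm_mult[OF assms(1,2)] by (simp add: add.assoc)
    also have "\<dots> = piq p (Dm r A $ i $ j + Dm r B $ i $ j)"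
      by (rule piq_add_dvd) (use q_dvd_pow[OF assms(3)] in auto)
    finally show ?thesis by (simp add: piq_ops)
  qed
  then show ?thesis by (auto simp: phi_def)
qed

lemma hom_phi:
  assumes "r \<ge> 1"
  shows "group_hom ((SL_grp :: ('a^'n::finite^'n) monoid)\<lparr>carrier := Gamma p r\<rparr>) (sl_K (FpV p)) (phi r)"
proof -
  have G: "group ((SL_grp :: ('a^'n^'n) monoid)\<lparr>carrier := Gamma p r\<rparr>)" by (rule group_Gr)
  have H: "group (sl_K (FpV p) :: ('n \<Rightarrow> 'n \<Rightarrow> 'a set) monoid)"
    by (rule comm_group.axioms(2)[OF comm_group_sl_K[OF cring.axioms(1)[OF cring_FpV]]])
  have "phi r \<in> hom ((SL_grp :: ('a^'n^'n) monoid)\<lparr>carrier := Gamma p r\<rparr>) (sl_K (FpV p))"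
    unfolding hom_def using phi_carrier[OF _ assms] phi_mult[OF _ _ assms]
    by (simp del: sl_K_simps add: Pi_def) blast
  then show ?thesis
    unfolding group_hom_def group_hom_axioms_def using G H by blast
qed

lemma phi_one_iff:
  assumes "A \<in> Gamma p r"
  shows "phi r A = \<one>\<^bsub>sl_K (FpV p)\<^esub> \<longleftrightarrow> A \<in> Gamma p (Suc r)"
proof
  assume asm: "phi r A = \<one>\<^bsub>sl_K (FpV p)\<^esub>"
  have "q dvd Dm r A $ i $ j" for i j
  proof -
    have "piq p (Dm r A $ i $ j) = \<zero>\<^bsub>FpV p\<^esub>"
      using fun_cong[OF fun_cong[OF asm, of i], of j] by (simp add: phi_def)
    then show ?thesis by (simp only: piq_zero_q)
  qed
  then have "\<forall>i j. q dvd Dm r A $ i $ j" by blast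
  then obtain Z where Z: "Dm r A = smat q Z" using mdvd_ex[of q "Dm r A"] by (auto simp: mdvd_def)
  have "A - mat 1 = smat (q ^ Suc r) Z" using Dm_Gamma[OF assms] Z by (simp add: smat_simps mult.commute)
  then show "A \<in> Gamma p (Suc r)" using assms by (auto simp: Gamma_iff' mdvd_ex)
next
  assume "A \<in> Gamma p (Suc r)"
  then obtain Y where "A - mat 1 = smat (q ^ Suc r) Y" by (auto simp: Gamma_iff' mdvd_ex)
  then have "A - mat 1 = smat (q ^ r) (smat q Y)" by (simp add: smat_simps mult.commute)
  then have "Dm r A = smat q Y" by (rule Dm_eq)
  then have "piq p (Dm r A $ i $ j) = \<zero>\<^bsub>FpV p\<^esub>" for i j by (simp only: piq_zero_q) simp
  then show "phi r A = \<one>\<^bsub>sl_K (FpV p)\<^esub>"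
    by (simp add: phi_def fun_eq_iff)
qed

lemma kernel_phi:
  "kernel ((SL_grp :: ('a^'n::finite^'n) monoid)\<lparr>carrier := Gamma p r\<rparr>) (sl_K (FpV p)) (phi r) = Gamma p (Suc r)"
  using phi_one_iff Gamma_mono[of r "Suc r" p] by (auto simp: kernel_def)

end




definition unitm :: "'a::comm_ring_1 \<Rightarrow> 'n::finite \<Rightarrow> 'n \<Rightarrow> 'a^'n^'n" where
  "unitm c i j = (\<chi> a b. if a = i \<and> b = j then c else 0)"

lemma unitm_nth [simp]: "unitm c i j $ a $ b = (if a = i \<and> b = j then c else 0)"
  by (simp add: unitm_def)

definition rowop :: "'n::finite \<Rightarrow> 'n \<Rightarrow> 'a::comm_ring_1 \<Rightarrow> 'a^'n^'n \<Rightarrow> 'a^'n^'n" where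
  "rowop i j c A = (\<chi> k. if k = i then row i A + c *s row j A else row k A)"

lemma det_rowop: "i \<noteq> j \<Longrightarrow> det (rowop i j c A) = det A"
  unfolding rowop_def by (rule det_row_operation)

lemma rowop_nth [simp]: "rowop i j c A $ a $ b = (if a = i then A $ i $ b + c * A $ j $ b else A $ a $ b)"
  by (simp add: rowop_def row_def)

lemma det_transv:
  assumes "i \<noteq> j"
  shows "det (mat 1 + smat s (unitm 1 i j) :: 'a::comm_ring_1^'n::finite^'n) = 1"
proof -
  have "mat 1 + smat s (unitm 1 i j) = rowop i j s (mat 1 :: 'a^'n^'n)"
    using assms by (auto simp: vec_eq_iff mat_def)
  then show ?thesis by (simp only: det_rowop[OF assms] det_I)
qed

lemma det_diaggen:
  assumes "i \<noteq> j"
  shows "det (mat 1 + smat s (unitm 1 i i + unitm 1 i j - unitm 1 j i - unitm 1 j j) :: 'a::comm_ring_1^'n::finite^'n) = 1"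
proof -
  let ?M = "mat 1 + smat s (unitm 1 i i + unitm 1 i j - unitm 1 j i - unitm 1 j j) :: 'a^'n^'n"
  have "rowop j i (-1) (rowop i j (-s) (rowop j i 1 ?M)) = mat 1"
    using assms by (auto simp: vec_eq_iff mat_def algebra_simps)
  then have "det (rowop j i (-1) (rowop i j (-s) (rowop j i 1 ?M))) = 1" by simp
  then show ?thesis using assms by (simp add: det_rowop)
qed

context ctx begin

definition Good :: "nat \<Rightarrow> 'a^'n::finite^'n \<Rightarrow> bool" where
  "Good r N \<longleftrightarrow> (\<exists>A. det A = 1 \<and> mdvd (q ^ Suc r) (A - mat 1 - smat (q ^ r) N))"

lemma Good_exact: "det (mat 1 + smat (q ^ r) N) = 1 \<Longrightarrow> Good r N"
  unfolding Good_def by (rule exI[of _ "mat 1 + smat (q ^ r) N"]) (simp add: mdvd_def)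

lemma Good_zero: "Good r 0"
  by (rule Good_exact) (simp add: smat_def zero_vec_def[symmetric])

lemma Good_add:
  assumes "r \<ge> 1" "Good r N1" "Good r N2"
  shows "Good r (N1 + N2)"
proof -
  let ?e = "q ^ r"
  obtain A1 where A1: "det A1 = 1" "mdvd (q ^ Suc r) (A1 - mat 1 - smat ?e N1)" using assms(2) by (auto simp: Good_def)
  obtain A2 where A2: "det A2 = 1" "mdvd (q ^ Suc r) (A2 - mat 1 - smat ?e N2)" using assms(3) by (auto simp: Good_def)
  have ee: "?e dvd q ^ Suc r" by (simp add: power_Suc)
  have m1: "mdvd ?e (A1 - mat 1)"
  proof -
    have "A1 - mat 1 = (A1 - mat 1 - smat ?e N1) + smat ?e N1" by simp
    moreover have "mdvd ?e (A1 - mat 1 - smat ?e N1)" by (rule mdvd_trans[OF A1(2) ee])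
    ultimately show ?thesis using mdvd_add mdvd_smat' by metis
  qed
  have m2: "mdvd ?e (A2 - mat 1)"
  proof -
    have "A2 - mat 1 = (A2 - mat 1 - smat ?e N2) + smat ?e N2" by simp
    moreover have "mdvd ?e (A2 - mat 1 - smat ?e N2)" by (rule mdvd_trans[OF A2(2) ee])
    ultimately show ?thesis using mdvd_add mdvd_smat' by metis
  qed
  have "mdvd (?e * ?e) ((A1 - mat 1) ** (A2 - mat 1))" by (rule mdvd_mult[OF m1 m2])
  moreover have "q ^ Suc r dvd ?e * ?e" using assms(1)
    using mult_dvd_mono[OF q_dvd_pow[OF assms(1)] dvd_refl[of "q^r"]] by (simp add: power_Suc)
  ultimately have m3: "mdvd (q ^ Suc r) ((A1 - mat 1) ** (A2 - mat 1))" by (rule mdvd_trans)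
  have eq: "A1 ** A2 - mat 1 - smat ?e (N1 + N2) = (A1 - mat 1) ** (A2 - mat 1) + (A1 - mat 1 - smat ?e N1) + (A2 - mat 1 - smat ?e N2)"
    by (simp add: prod_minus_one smat_simps(4)[symmetric] algebra_simps)
  have "mdvd (q ^ Suc r) (A1 ** A2 - mat 1 - smat ?e (N1 + N2))"
    unfolding eq by (intro mdvd_add m3 A1(2) A2(2))
  moreover have "det (A1 ** A2) = 1" using A1 A2 by (simp add: det_mul)
  ultimately show ?thesis unfolding Good_def by blast
qed

lemma Good_mod:
  assumes "Good r N" "mdvd q (N' - N)"
  shows "Good r N'"
proof -
  let ?e = "q ^ r"
  obtain A where A: "det A = 1" "mdvd (q ^ Suc r) (A - mat 1 - smat ?e N)" using assms(1) by (auto simp: Good_def)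
  have eq: "A - mat 1 - smat ?e N' = (A - mat 1 - smat ?e N) - smat ?e (N' - N)"
    by (simp add: smat_simps(5)[symmetric])
  have "mdvd (q ^ Suc r) (smat ?e (N' - N))"
    using mdvd_smat[OF assms(2), of ?e] by (metis mult.commute power_Suc)
  then have "mdvd (q ^ Suc r) (A - mat 1 - smat ?e N')" unfolding eq by (intro mdvd_diff A(2))
  then show ?thesis using A(1) unfolding Good_def by blast
qed

lemma Good_sum:
  assumes "r \<ge> 1" "finite S" "\<And>k. k \<in> S \<Longrightarrow> Good r (f k)"
  shows "Good r (sum f S)"
  using assms(2,3)
proof (induction S rule: finite_induct)
  case empty then show ?case by (simp add: Good_zero)
next
  case (insert x S) then show ?case by (simp add: Good_add[OF assms(1)])
qed

lemma Good_transv: "i \<noteq> j \<Longrightarrow> Good r (unitm c i j)"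
proof (rule Good_exact)
  assume ij: "i \<noteq> j"
  have "smat (q ^ r) (unitm c i j) = smat (q ^ r * c) (unitm 1 i j)" by (simp add: vec_eq_iff)
  then show "det (mat 1 + smat (q ^ r) (unitm c i j)) = 1" using det_transv[OF ij] by simp
qed

lemma Good_diag:
  assumes "r \<ge> 1" "i \<noteq> j"
  shows "Good r (unitm c i i - unitm c j j)"
proof -
  let ?N = "unitm c i i + unitm c i j - unitm c j i - unitm c j j"
  have "smat (q ^ r) ?N = smat (q ^ r * c) (unitm 1 i i + unitm 1 i j - unitm 1 j i - unitm 1 j j)"
    by (simp add: vec_eq_iff)
  then have "Good r ?N" using det_diaggen[OF assms(2)] by (intro Good_exact) simp
  then have "Good r (?N + unitm (-c) i j + unitm c j i)"
    using assms by (intro Good_add Good_transv) auto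
  moreover have "?N + unitm (-c) i j + unitm c j i = unitm c i i - unitm c j j"
    using assms by (auto simp: vec_eq_iff)
  ultimately show ?thesis by simp
qed

lemma Good_off:
  fixes X :: "'a^'n::finite^'n"
  assumes r: "r \<ge> 1" and S: "finite S"
  shows "Good r ((\<chi> a b. if (a, b) \<in> S \<and> a \<noteq> b then X $ a $ b else 0) :: 'a^'n^'n)"
  using S
proof (induction S rule: finite_induct)
  case empty
  have "((\<chi> a b. if (a, b) \<in> {} \<and> a \<noteq> b then X $ a $ b else 0) :: 'a^'n^'n) = 0"
    by (simp add: vec_eq_iff)
  then show ?case by (simp add: Good_zero)
next
  case (insert s S)
  obtain u v where s: "s = (u, v)" by fastforce
  let ?M = "((\<chi> a b. if (a, b) \<in> S \<and> a \<noteq> b then X $ a $ b else 0) :: 'a^'n^'n)"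
  let ?E = "(if u \<noteq> v then unitm (X $ u $ v) u v else 0) :: 'a^'n^'n"
  have "Good r ?E" by (auto intro: Good_transv Good_zero)
  then have "Good r (?M + ?E)" by (rule Good_add[OF r insert.IH])
  moreover have "?M + ?E = ((\<chi> a b. if (a, b) \<in> insert s S \<and> a \<noteq> b then X $ a $ b else 0) :: 'a^'n^'n)"
    using insert.hyps(2) s by (auto simp: vec_eq_iff)
  ultimately show ?case by simp
qed

lemma Good_dia:
  fixes X :: "'a^'n::finite^'n"
  assumes r: "r \<ge> 1" and S: "finite S"
  shows "Good r ((\<chi> a b. if a = b then (if a \<in> S \<and> a \<noteq> i0 then X $ a $ a
            else if a = i0 then - (\<Sum>c\<in>S - {i0}. X $ c $ c) else 0) else 0) :: 'a^'n^'n)"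
  using S
proof (induction S rule: finite_induct)
  case empty
  have "((\<chi> a b. if a = b then (if a \<in> {} \<and> a \<noteq> i0 then X $ a $ a
            else if a = i0 then - (\<Sum>c\<in>{} - {i0}. X $ c $ c) else 0) else 0) :: 'a^'n^'n) = 0"
    by (simp add: vec_eq_iff)
  then show ?case by (simp add: Good_zero)
next
  case (insert s S)
  let ?M = "((\<chi> a b. if a = b then (if a \<in> S \<and> a \<noteq> i0 then X $ a $ a
            else if a = i0 then - (\<Sum>c\<in>S - {i0}. X $ c $ c) else 0) else 0) :: 'a^'n^'n)"
  let ?M' = "((\<chi> a b. if a = b then (if a \<in> insert s S \<and> a \<noteq> i0 then X $ a $ a
            else if a = i0 then - (\<Sum>c\<in>insert s S - {i0}. X $ c $ c) else 0) else 0) :: 'a^'n^'n)"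
  show ?case
  proof (cases "s = i0")
    case True
    have "insert s S - {i0} = S - {i0}" using True by auto
    then have "?M' = ?M" using True by (simp add: vec_eq_iff)
    then show ?thesis using insert.IH by simp
  next
    case False
    let ?E = "unitm (X $ s $ s) s s - unitm (X $ s $ s) i0 i0 :: 'a^'n^'n"
    have "Good r ?E" using False by (intro Good_diag[OF r])
    then have "Good r (?M + ?E)" by (rule Good_add[OF r insert.IH])
    moreover have sum_ins: "(\<Sum>c\<in>insert s S - {i0}. X $ c $ c) = X $ s $ s + (\<Sum>c\<in>S - {i0}. X $ c $ c)"
    proof -
      have "insert s S - {i0} = insert s (S - {i0})" using False by auto
      then show ?thesis using insert.hyps by simp
    qed
    moreover have "?M + ?E = ?M'"
      using insert.hyps(2) False unfolding sum_ins by (auto simp: vec_eq_iff)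
    ultimately show ?thesis by simp
  qed
qed

lemma Good_lift:
  fixes X :: "'a^'n::finite^'n"
  assumes r: "r \<ge> 1" and tr: "q dvd trace X"
  shows "Good r X"
proof -
  fix i0 :: 'n
  let ?off = "((\<chi> a b. if (a, b) \<in> UNIV \<and> a \<noteq> b then X $ a $ b else 0) :: 'a^'n^'n)"
  let ?dia = "((\<chi> a b. if a = b then (if a \<in> UNIV \<and> a \<noteq> i0 then X $ a $ a
            else if a = i0 then - (\<Sum>c\<in>UNIV - {i0}. X $ c $ c) else 0) else 0) :: 'a^'n^'n)"
  have g3: "Good r (?off + ?dia)" by (rule Good_add[OF r Good_off[OF r] Good_dia[OF r]]) simp_all
  have tr_split: "trace X = X $ i0 $ i0 + (\<Sum>a\<in>UNIV - {i0}. X $ a $ a)"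
    unfolding trace_def by (simp add: sum.remove)
  have "mdvd q (X - (?off + ?dia))"
    unfolding mdvd_def
  proof (intro allI)
    fix x y
    show "q dvd (X - (?off + ?dia)) $ x $ y"
      using tr by (auto simp: tr_split)
  qed
  then show ?thesis by (rule Good_mod[OF g3])
qed

lemma phi_surj:
  assumes r: "r \<ge> 1"
  shows "phi r ` Gamma p r = carrier (sl_K (FpV p) :: ('n::finite \<Rightarrow> 'n \<Rightarrow> 'a set) monoid)"
proof
  show "phi r ` Gamma p r \<subseteq> carrier (sl_K (FpV p) :: ('n \<Rightarrow> 'n \<Rightarrow> 'a set) monoid)"
    using phi_carrier[OF _ r] by blast
next
  show "carrier (sl_K (FpV p) :: ('n \<Rightarrow> 'n \<Rightarrow> 'a set) monoid) \<subseteq> phi r ` Gamma p r"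
  proof
    fix M :: "'n \<Rightarrow> 'n \<Rightarrow> 'a set"
    assume M: "M \<in> carrier (sl_K (FpV p))"
    define X :: "'a^'n^'n" where "X = (\<chi> i j. SOME x. piq p x = M i j)"
    have hX: "piq p (X $ i $ j) = M i j" for i j
    proof -
      have "M i j \<in> carrier (FpV p)" using M by simp
      then have "M i j \<in> range (piq p)" by (simp only: carrier_FpV)
      then have "\<exists>x. piq p x = M i j" by auto
      then have "piq p (SOME x. piq p x = M i j) = M i j" by (rule someI_ex)
      then show ?thesis unfolding X_def by simp
    qed
    have "piq p (trace X) = trace_K (FpV p) M"
      unfolding trace_def trace_K_def by (simp add: piq_sum hX)
    also have "\<dots> = \<zero>\<^bsub>FpV p\<^esub>" using M by simp
    finally have "q dvd trace X" by (simp only: piq_zero_q)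
    then have "Good r X" by (rule Good_lift[OF r])
    then obtain A where A: "det A = 1" "mdvd (q ^ Suc r) (A - mat 1 - smat (q ^ r) X)"
      unfolding Good_def by blast
    then obtain Z where Z: "A - mat 1 - smat (q ^ r) X = smat (q ^ Suc r) Z" by (auto simp: mdvd_ex)
    have eq: "A - mat 1 = smat (q ^ r) (X + smat q Z)"
      using Z by (simp add: vec_eq_iff algebra_simps)
    then have AG: "A \<in> Gamma p r" using A(1) by (auto simp: Gamma_iff' mdvd_ex)
    have "Dm r A = X + smat q Z" using eq by (rule Dm_eq)
    then have "phi r A = M"
      by (auto simp: phi_def fun_eq_iff hX[symmetric] piq_dvd_iff)
    then show "M \<in> phi r ` Gamma p r" using AG by blast
  qed
qed

end




context ctx begin

lemma comm_expand:
  fixes x y :: "'a^'n::finite^'n"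
  assumes x: "x \<in> Gamma p a" and y: "y \<in> Gamma p b" and a: "a \<ge> 1" and b: "b \<ge> 1"
  defines "C \<equiv> Dm a x ** Dm b y - Dm b y ** Dm a x"
  shows "\<exists>W. grp_comm x y - mat 1 = smat (q ^ (a + b)) (C + smat q W)"
proof -
  let ?X = "Dm a x" and ?Y = "Dm b y"
  let ?xi = "inv\<^bsub>SL_grp\<^esub> x" and ?yi = "inv\<^bsub>SL_grp\<^esub> y"
  have dx: "det x = 1" and dy: "det y = 1" using x y by (auto simp: Gamma_iff')
  have xf: "x = mat 1 + smat (q ^ a) ?X" by (rule Gamma_form[OF x])
  have yf: "y = mat 1 + smat (q ^ b) ?Y" by (rule Gamma_form[OF y])
  have "x ** y - y ** x = smat (q ^ a) ?X ** smat (q ^ b) ?Y - smat (q ^ b) ?Y ** smat (q ^ a) ?X"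
    by (subst (1 2) xf, subst (1 2) yf)
      (simp add: matrix_add_ldistrib matrix_add_rdistrib algebra_simps)
  also have "\<dots> = smat (q ^ (a + b)) C"
    unfolding smat_simps(1) C_def by (simp add: smat_simps(5) power_add mult.commute)
  finally have diff: "x ** y - y ** x = smat (q ^ (a + b)) C" .
  let ?W = "?xi ** ?yi"
  have WG: "?W \<in> Gamma p 1"
  proof -
    have "?xi \<in> Gamma p 1" using Gamma_inv[OF x] Gamma_mono[of 1 a p] a by blast
    moreover have "?yi \<in> Gamma p 1" using Gamma_inv[OF y] Gamma_mono[of 1 b p] b by blast
    ultimately show ?thesis by (rule Gamma_mult)
  qed
  have Wyx: "?W ** (y ** x) = mat 1"
  proof -
    have "?W ** (y ** x) = ?xi ** ((?yi ** y) ** x)" by (simp add: matrix_mul_assoc)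
    also have "\<dots> = mat 1" using SL_inv[OF dx] SL_inv[OF dy] by simp
    finally show ?thesis .
  qed
  have "grp_comm x y = ?W ** (x ** y)" by (simp add: grp_comm_def matrix_mul_assoc)
  then have "grp_comm x y - mat 1 = ?W ** (x ** y) - ?W ** (y ** x)" using Wyx by simp
  also have "\<dots> = ?W ** smat (q ^ (a + b)) C" by (simp add: matrix_sub_ldistrib[symmetric] diff)
  also have "\<dots> = (mat 1 + smat q (Dm 1 ?W)) ** smat (q ^ (a + b)) C"
    using Gamma_form[OF WG] by simp
  also have "\<dots> = smat (q ^ (a + b)) (C + smat q (Dm 1 ?W ** C))"
    by (simp add: matrix_add_rdistrib smat_simps vec_eq_iff algebra_simps)
  finally show ?thesis by blast
qed

lemma comm_Gamma:
  fixes x y :: "'a^'n::finite^'n"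
  assumes x: "x \<in> Gamma p a" and y: "y \<in> Gamma p b" and a: "a \<ge> 1" and b: "b \<ge> 1"
  shows "grp_comm x y \<in> Gamma p (a + b)"
proof -
  obtain W where W: "grp_comm x y - mat 1 = smat (q ^ (a + b)) (Dm a x ** Dm b y - Dm b y ** Dm a x + smat q W)"
    using comm_expand[OF assms] by blast
  have dx: "det x = 1" and dy: "det y = 1" using x y by (auto simp: Gamma_iff')
  have "det (grp_comm x y) = 1"
    unfolding grp_comm_def using SL_inv[OF dx] SL_inv[OF dy] dx dy by (simp add: det_mul)
  then show ?thesis using W by (auto simp: Gamma_iff' mdvd_ex)
qed

lemma phi_comm:
  fixes x y :: "'a^'n::finite^'n"
  assumes x: "x \<in> Gamma p a" and y: "y \<in> Gamma p b" and a: "a \<ge> 1" and b: "b \<ge> 1"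
  shows "phi (a + b) (grp_comm x y) = lie_bracket_K (FpV p) (phi a x) (phi b y)"
proof -
  let ?C = "Dm a x ** Dm b y - Dm b y ** Dm a x"
  obtain W where W: "grp_comm x y - mat 1 = smat (q ^ (a + b)) (?C + smat q W)"
    using comm_expand[OF assms] by blast
  have D: "Dm (a + b) (grp_comm x y) = ?C + smat q W" using W by (rule Dm_eq)
  show ?thesis
  proof (intro ext)
    fix i j
    have "phi (a + b) (grp_comm x y) i j = piq p (q * W $ i $ j + ?C $ i $ j)"
      unfolding phi_def D by (simp add: add.commute)
    also have "\<dots> = piq p (?C $ i $ j)" by (rule piq_add_dvd) simp
    also have "\<dots> = piq p (\<Sum>k\<in>UNIV. Dm a x $ i $ k * Dm b y $ k $ j) \<ominus>\<^bsub>FpV p\<^esub>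
                    piq p (\<Sum>k\<in>UNIV. Dm b y $ i $ k * Dm a x $ k $ j)"
      by (simp add: matrix_matrix_mult_def piq_ops)
    also have "\<dots> = lie_bracket_K (FpV p) (phi a x) (phi b y) i j"
      unfolding lie_bracket_K_def mat_mul_K_def phi_def by (simp add: piq_sum piq_ops)
    finally show "phi (a + b) (grp_comm x y) i j = lie_bracket_K (FpV p) (phi a x) (phi b y) i j" .
  qed
qed

end




lemma r_coset_upd: "r_coset (G\<lparr>carrier := C\<rparr>) = r_coset G"
  by (simp add: r_coset_def fun_eq_iff)

context ctx begin

lemma group_sl: "group (sl_K (FpV p) :: ('n::finite \<Rightarrow> 'n \<Rightarrow> 'a set) monoid)"
  by (rule comm_group.axioms(2)[OF comm_group_sl_K[OF cring.axioms(1)[OF cring_FpV]]])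

lemma comm_group_sl: "comm_group (sl_K (FpV p) :: ('n::finite \<Rightarrow> 'n \<Rightarrow> 'a set) monoid)"
  by (rule comm_group_sl_K[OF cring.axioms(1)[OF cring_FpV]])

lemma iota_iso:
  assumes r: "r \<ge> 1"
  shows "(\<lambda>X. the_elem (phi r ` X)) \<in> iso (gr_deg p r :: ('a^'n::finite^'n) set monoid) (sl_K (FpV p))"
proof -
  interpret group_hom "(SL_grp :: ('a^'n^'n) monoid)\<lparr>carrier := Gamma p r\<rparr>" "sl_K (FpV p)" "phi r"
    by (rule hom_phi[OF r])
  have "phi r ` carrier ((SL_grp :: ('a^'n^'n) monoid)\<lparr>carrier := Gamma p r\<rparr>) = carrier (sl_K (FpV p))"
    using phi_surj[OF r] by simp
  from FactGroup_iso_set[OF this] show ?thesis unfolding kernel_phi gr_deg_def .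
qed

lemma group_gr:
  assumes r: "r \<ge> 1"
  shows "group (gr_deg p r :: ('a^'n::finite^'n) set monoid)"
proof -
  interpret group_hom "(SL_grp :: ('a^'n^'n) monoid)\<lparr>carrier := Gamma p r\<rparr>" "sl_K (FpV p)" "phi r"
    by (rule hom_phi[OF r])
  have "Gamma p (Suc r) \<lhd> (SL_grp :: ('a^'n^'n) monoid)\<lparr>carrier := Gamma p r\<rparr>"
    using normal_kernel unfolding kernel_phi .
  then show ?thesis unfolding gr_deg_def by (rule normal.factorgroup_is_group)
qed

lemma iota_coset:
  assumes r: "r \<ge> 1" and g: "(g :: 'a^'n::finite^'n) \<in> Gamma p r"
  shows "the_elem (phi r ` (Gamma p (Suc r) #>\<^bsub>SL_grp\<^esub> g)) = phi r g"
proof -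
  interpret S: group "sl_K (FpV p) :: ('n \<Rightarrow> 'n \<Rightarrow> 'a set) monoid" by (rule group_sl)
  have "phi r ` (Gamma p (Suc r) #>\<^bsub>SL_grp\<^esub> g) = {phi r g}"
  proof
    show "phi r ` (Gamma p (Suc r) #>\<^bsub>SL_grp\<^esub> g) \<subseteq> {phi r g}"
    proof
      fix z assume "z \<in> phi r ` (Gamma p (Suc r) #>\<^bsub>SL_grp\<^esub> g)"
      then obtain h where h: "h \<in> Gamma p (Suc r)" and z: "z = phi r (h ** g)"
        by (auto simp: r_coset_def)
      have hr: "h \<in> Gamma p r" using h Gamma_mono[of r "Suc r" p] by auto
      have "phi r (h ** g) = phi r h \<otimes>\<^bsub>sl_K (FpV p)\<^esub> phi r g" by (rule phi_mult[OF hr g r])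
      also have "\<dots> = phi r g" using phi_one_iff[OF hr] h phi_carrier[OF g r]
        by (simp del: sl_K_simps)
      finally show "z \<in> {phi r g}" using z by simp
    qed
    show "{phi r g} \<subseteq> phi r ` (Gamma p (Suc r) #>\<^bsub>SL_grp\<^esub> g)"
    proof -
      have "mat 1 ** g \<in> Gamma p (Suc r) #>\<^bsub>SL_grp\<^esub> g"
        unfolding r_coset_def by (rule UN_I[OF Gamma_one]) simp
      then show ?thesis by force
    qed
  qed
  then show ?thesis by simp
qed

lemma brackets_sub:
  assumes i: "i \<ge> 1"
  shows "brackets_deg p i \<subseteq> carrier (gr_deg p i :: ('a^'n::finite^'n) set monoid)"
proof
  fix Z assume "Z \<in> (brackets_deg p i :: ('a^'n^'n) set set)"
  then have "\<exists>x y a b. Z = Gamma p (Suc i) #>\<^bsub>SL_grp\<^esub> grp_comm x y \<and> 1 \<le> a \<and> 1 \<le> b \<and> a + b = i \<and> x \<in> Gamma p a \<and> y \<in> Gamma p b"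
    unfolding brackets_deg_def by (simp only: mem_Collect_eq)
  then obtain x y :: "'a^'n^'n" and a b where Z: "Z = Gamma p (Suc i) #>\<^bsub>SL_grp\<^esub> grp_comm x y"
    and ab: "1 \<le> a" "1 \<le> b" "a + b = i" and x: "x \<in> Gamma p a" and y: "y \<in> Gamma p b"
    by (elim exE conjE)
  have "grp_comm x y \<in> Gamma p i" using comm_Gamma[OF x y ab(1,2)] ab(3) by simp
  then have c: "grp_comm x y \<in> carrier ((SL_grp :: ('a^'n^'n) monoid)\<lparr>carrier := Gamma p i\<rparr>)" by simp
  have N: "Gamma p (Suc i) \<subseteq> carrier ((SL_grp :: ('a^'n^'n) monoid)\<lparr>carrier := Gamma p i\<rparr>)"
    using Gamma_mono[of i "Suc i" p] by simp
  have "Gamma p (Suc i) #>\<^bsub>(SL_grp :: ('a^'n^'n) monoid)\<lparr>carrier := Gamma p i\<rparr>\<^esub> grp_comm x y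
      \<in> rcosets\<^bsub>(SL_grp :: ('a^'n^'n) monoid)\<lparr>carrier := Gamma p i\<rparr>\<^esub> Gamma p (Suc i)"
    by (rule group.rcosetsI[OF group_Gr N c])
  then have "Z \<in> rcosets\<^bsub>(SL_grp :: ('a^'n^'n) monoid)\<lparr>carrier := Gamma p i\<rparr>\<^esub> Gamma p (Suc i)"
    unfolding Z r_coset_upd .
  then show "Z \<in> carrier (gr_deg p i)"
    unfolding gr_deg_def FactGroup_def by simp
qed

lemma brackets_image:
  assumes i: "i \<ge> 2"
  shows "(\<lambda>X. the_elem (phi i ` X)) ` (brackets_deg p i :: ('a^'n::finite^'n) set set)
       = {lie_bracket_K (FpV p) A B | A B. A \<in> carrier (sl_K (FpV p)) \<and> B \<in> carrier (sl_K (FpV p))}"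
proof
  show "(\<lambda>X. the_elem (phi i ` X)) ` (brackets_deg p i :: ('a^'n::finite^'n) set set)
       \<subseteq> {lie_bracket_K (FpV p) A B | A B. A \<in> carrier (sl_K (FpV p)) \<and> B \<in> carrier (sl_K (FpV p))}"
  proof
    fix z assume "z \<in> (\<lambda>X. the_elem (phi i ` X)) ` (brackets_deg p i :: ('a^'n::finite^'n) set set)"
    then obtain Z where zZ: "z = the_elem (phi i ` Z)" and "Z \<in> (brackets_deg p i :: ('a^'n^'n) set set)" by blast
    then have "\<exists>x y a b. Z = Gamma p (Suc i) #>\<^bsub>SL_grp\<^esub> grp_comm x y \<and> 1 \<le> a \<and> 1 \<le> b \<and> a + b = i \<and> x \<in> Gamma p a \<and> y \<in> Gamma p b"
      unfolding brackets_deg_def by (simp only: mem_Collect_eq)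
    then obtain x y :: "'a^'n^'n" and a b where Z: "Z = Gamma p (Suc i) #>\<^bsub>SL_grp\<^esub> grp_comm x y"
      and ab: "1 \<le> a" "1 \<le> b" "a + b = i" and x: "x \<in> Gamma p a" and y: "y \<in> Gamma p b"
      by (elim exE conjE)
    have z: "z = the_elem (phi i ` (Gamma p (Suc i) #>\<^bsub>SL_grp\<^esub> grp_comm x y))" using zZ Z by simp
    have "grp_comm x y \<in> Gamma p i" using comm_Gamma[OF x y ab(1,2)] ab(3) by simp
    then have "z = phi i (grp_comm x y)" using iota_coset[of i] i z by simp
    also have "\<dots> = lie_bracket_K (FpV p) (phi a x) (phi b y)" using phi_comm[OF x y ab(1,2)] ab(3) by simp
    finally show "z \<in> {lie_bracket_K (FpV p) A B | A B. A \<in> carrier (sl_K (FpV p)) \<and> B \<in> carrier (sl_K (FpV p))}"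
      using phi_carrier[OF x ab(1)] phi_carrier[OF y ab(2)] by blast
  qed
next
  show "{lie_bracket_K (FpV p) A B | A B. A \<in> carrier (sl_K (FpV p)) \<and> B \<in> carrier (sl_K (FpV p))}
      \<subseteq> (\<lambda>X. the_elem (phi i ` X)) ` (brackets_deg p i :: ('a^'n::finite^'n) set set)"
  proof
    fix z assume "z \<in> {lie_bracket_K (FpV p) A B | A B. A \<in> carrier (sl_K (FpV p)) \<and> B \<in> carrier (sl_K (FpV p :: 'a set ring) :: ('n \<Rightarrow> 'n \<Rightarrow> 'a set) monoid)}"
    then obtain A B where z: "z = lie_bracket_K (FpV p) A B"
      and A: "A \<in> carrier (sl_K (FpV p) :: ('n \<Rightarrow> 'n \<Rightarrow> 'a set) monoid)"
      and B: "B \<in> carrier (sl_K (FpV p) :: ('n \<Rightarrow> 'n \<Rightarrow> 'a set) monoid)" by blast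
    have s1: "phi 1 ` (Gamma p 1 :: ('a^'n^'n) set) = carrier (sl_K (FpV p) :: ('n \<Rightarrow> 'n \<Rightarrow> 'a set) monoid)"
      by (rule phi_surj) simp
    have "A \<in> phi 1 ` (Gamma p 1 :: ('a^'n^'n) set)" using A unfolding s1 .
    then obtain x :: "'a^'n^'n" where x: "x \<in> Gamma p 1" "A = phi 1 x" by blast
    have s2: "phi (i - 1) ` (Gamma p (i - 1) :: ('a^'n^'n) set) = carrier (sl_K (FpV p) :: ('n \<Rightarrow> 'n \<Rightarrow> 'a set) monoid)"
      by (rule phi_surj) (use i in simp)
    have "B \<in> phi (i - 1) ` (Gamma p (i - 1) :: ('a^'n^'n) set)" using B unfolding s2 .
    then obtain y :: "'a^'n^'n" where y: "y \<in> Gamma p (i - 1)" "B = phi (i - 1) y" by blast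
    have ab: "1 \<le> (1::nat)" "1 \<le> i - 1" "1 + (i - 1) = i" using i by auto
    have cG: "grp_comm x y \<in> Gamma p i" using comm_Gamma[OF x(1) y(1) ab(1,2)] ab(3) by simp
    have "z = phi i (grp_comm x y)" using phi_comm[OF x(1) y(1) ab(1,2)] ab(3) z x y by simp
    also have "\<dots> = the_elem (phi i ` (Gamma p (Suc i) #>\<^bsub>SL_grp\<^esub> grp_comm x y))"
      using iota_coset[OF _ cG] i by simp
    finally have "z = the_elem (phi i ` (Gamma p (Suc i) #>\<^bsub>SL_grp\<^esub> grp_comm x y))" .
    moreover have "Gamma p (Suc i) #>\<^bsub>SL_grp\<^esub> grp_comm x y \<in> brackets_deg p i"
      unfolding brackets_deg_def mem_Collect_eq using x(1) y(1) ab
      by (intro exI[of _ x] exI[of _ y] exI[of _ 1] exI[of _ "i - 1"] conjI refl)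
    ultimately show "z \<in> (\<lambda>X. the_elem (phi i ` X)) ` (brackets_deg p i :: ('a^'n::finite^'n) set set)"
      by blast
  qed
qed

end




lemma carrier_Mod: "carrier (G Mod H) = (\<lambda>a. H #>\<^bsub>G\<^esub> a) ` carrier G"
  by (auto simp: FactGroup_def RCOSETS_def)

lemma iso_isoI: "f \<in> iso G H \<Longrightarrow> G \<cong> H"
  unfolding is_iso_def by blast

lemma one_Mod: "\<one>\<^bsub>G Mod H\<^esub> = H"
  by (simp add: FactGroup_def)

context ctx begin

lemma deg1: "(H1_gr_deg p 1 :: ('a ^ 'n::finite ^ 'n) set set monoid)
            \<cong> (sl_K (FpV p) :: ('n \<Rightarrow> 'n \<Rightarrow> 'a set) monoid)"
proof -
  have B: "brackets_deg p 1 = ({} :: ('a ^ 'n ^ 'n) set set)"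
  proof (rule equals0I)
    fix Z assume "Z \<in> (brackets_deg p 1 :: ('a ^ 'n ^ 'n) set set)"
    then have "\<exists>x y a b. Z = Gamma p (Suc 1) #>\<^bsub>SL_grp\<^esub> grp_comm x y \<and> 1 \<le> a \<and> 1 \<le> b \<and> a + b = (1::nat) \<and> x \<in> Gamma p a \<and> y \<in> Gamma p b"
      unfolding brackets_deg_def by (simp only: mem_Collect_eq)
    then obtain a b :: nat where "1 \<le> a" "1 \<le> b" "a + b = 1" by (elim exE conjE)
    then show False by simp
  qed
  interpret gr: group "gr_deg p 1 :: ('a ^ 'n ^ 'n) set monoid" by (rule group_gr) simp
  have eq: "H1_gr_deg p 1 = (gr_deg p 1 :: ('a ^ 'n ^ 'n) set monoid) Mod {\<one>\<^bsub>gr_deg p 1\<^esub>}"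
    unfolding H1_gr_deg_def B gr.generate_empty ..
  have "(H1_gr_deg p 1 :: ('a ^ 'n ^ 'n) set set monoid) \<cong> (gr_deg p 1 :: ('a ^ 'n ^ 'n) set monoid)"
    unfolding eq by (rule iso_isoI[OF group.trivial_factor_iso[OF group_gr]]) simp
  moreover have "(gr_deg p 1 :: ('a ^ 'n ^ 'n) set monoid) \<cong> (sl_K (FpV p) :: ('n \<Rightarrow> 'n \<Rightarrow> 'a set) monoid)"
    by (rule iso_isoI[OF iota_iso]) simp
  ultimately show ?thesis by (rule iso_trans)
qed

lemma degi:
  assumes i: "i \<ge> 2"
  shows "(H1_gr_deg p i :: ('a ^ 'n::finite ^ 'n) set set monoid)
            \<cong> (H1_sl_K (FpV p) :: ('n \<Rightarrow> 'n \<Rightarrow> 'a set) set monoid)"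
proof -
  have i1: "i \<ge> 1" using i by simp
  let ?gr = "gr_deg p i :: ('a ^ 'n ^ 'n) set monoid"
  let ?S = "sl_K (FpV p) :: ('n \<Rightarrow> 'n \<Rightarrow> 'a set) monoid"
  let ?io = "\<lambda>X. the_elem (phi i ` X) :: 'n \<Rightarrow> 'n \<Rightarrow> 'a set"
  let ?B = "brackets_deg p i :: ('a ^ 'n ^ 'n) set set"
  let ?Bs = "{lie_bracket_K (FpV p) A B | A B. A \<in> carrier ?S \<and> B \<in> carrier ?S}"
  let ?N = "generate ?S ?Bs"
  interpret gr: group ?gr by (rule group_gr[OF i1])
  interpret S: comm_group ?S by (rule comm_group_sl)
  have io: "?io \<in> iso ?gr ?S" by (rule iota_iso[OF i1])
  have ioh: "?io \<in> hom ?gr ?S" by (rule iso_imp_homomorphism[OF io])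
  interpret io: group_hom ?gr ?S ?io
    unfolding group_hom_def group_hom_axioms_def using ioh gr.is_group S.is_group by blast
  have bij: "bij_betw ?io (carrier ?gr) (carrier ?S)" using io by (simp add: iso_def)
  have Bsub: "?B \<subseteq> carrier ?gr" by (rule brackets_sub[OF i1])
  have img: "?io ` ?B = ?Bs" by (rule brackets_image[OF i])
  have surjio: "?io ` carrier ?gr = carrier ?S" using bij by (rule bij_betw_imp_surj_on)
  have Bs_sub: "?Bs \<subseteq> carrier ?S"
  proof -
    have "?io ` ?B \<subseteq> ?io ` carrier ?gr" using Bsub by (rule image_mono)
    then show ?thesis by (simp only: img surjio)
  qed
  have Nsub: "subgroup ?N ?S" by (rule S.generate_is_subgroup[OF Bs_sub])
  have Nn: "?N \<lhd> ?S" by (rule S.subgroup_imp_normal[OF Nsub])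
  have Ngen: "?N = ?io ` generate ?gr ?B" using io.generate_img[OF Bsub] img by simp
  define h where "h = (\<lambda>X. ?N #>\<^bsub>?S\<^esub> ?io X)"
  have "(\<lambda>a. ?N #>\<^bsub>?S\<^esub> a) \<circ> ?io \<in> hom ?gr (?S Mod ?N)"
    by (rule hom_compose[OF ioh normal.r_coset_hom_Mod[OF Nn]])
  then have hh: "h \<in> hom ?gr (?S Mod ?N)" by (simp add: h_def comp_def)
  interpret hh: group_hom ?gr "?S Mod ?N" h
    unfolding group_hom_def group_hom_axioms_def
    using hh gr.is_group normal.factorgroup_is_group[OF Nn] by blast
  have surj: "h ` carrier ?gr = carrier (?S Mod ?N)"
  proof -
    have "h ` carrier ?gr = (\<lambda>a. ?N #>\<^bsub>?S\<^esub> a) ` (?io ` carrier ?gr)"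
      unfolding h_def by (simp only: image_image)
    also have "\<dots> = (\<lambda>a. ?N #>\<^bsub>?S\<^esub> a) ` carrier ?S" by (simp only: surjio)
    also have "\<dots> = carrier (?S Mod ?N)" by (rule carrier_Mod[symmetric])
    finally show ?thesis .
  qed
  have ker: "kernel ?gr (?S Mod ?N) h = generate ?gr ?B"
  proof -
    have geninc: "generate ?gr ?B \<subseteq> carrier ?gr" by (rule gr.generate_incl[OF Bsub])
    have "X \<in> kernel ?gr (?S Mod ?N) h \<longleftrightarrow> X \<in> generate ?gr ?B" for X
    proof (cases "X \<in> carrier ?gr")
      case True
      have ioX: "?io X \<in> carrier ?S" using True surjio by blast
      have "h X = \<one>\<^bsub>?S Mod ?N\<^esub> \<longleftrightarrow> ?N #>\<^bsub>?S\<^esub> ?io X = ?N" by (simp only: h_def one_Mod)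
      also have "\<dots> \<longleftrightarrow> ?io X \<in> ?N"
      proof
        assume eq: "?N #>\<^bsub>?S\<^esub> ?io X = ?N"
        show "?io X \<in> ?N" using S.rcos_self[OF ioX Nsub] by (simp only: eq)
      next
        assume "?io X \<in> ?N"
        then show "?N #>\<^bsub>?S\<^esub> ?io X = ?N" by (rule subgroup.rcos_const[OF Nsub S.is_group])
      qed
      also have "\<dots> \<longleftrightarrow> X \<in> generate ?gr ?B"
      proof
        assume "?io X \<in> ?N"
        then obtain Y where Y: "Y \<in> generate ?gr ?B" "?io X = ?io Y" unfolding Ngen by blast
        have inj: "inj_on ?io (carrier ?gr)" using bij by (rule bij_betw_imp_inj_on)
        have "Y \<in> carrier ?gr" using Y(1) geninc by blast
        then have "X = Y" by (rule inj_onD[OF inj Y(2) True])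
        then show "X \<in> generate ?gr ?B" using Y by simp
      next
        assume "X \<in> generate ?gr ?B"
        then show "?io X \<in> ?N" unfolding Ngen by blast
      qed
      finally have "h X = \<one>\<^bsub>?S Mod ?N\<^esub> \<longleftrightarrow> X \<in> generate ?gr ?B" .
      then show ?thesis unfolding kernel_def mem_Collect_eq using True by blast
    next
      case False
      then show ?thesis unfolding kernel_def mem_Collect_eq using geninc by blast
    qed
    then show ?thesis by blast
  qed
  have "?gr Mod kernel ?gr (?S Mod ?N) h \<cong> ?S Mod ?N" by (rule hh.FactGroup_iso[OF surj])
  then show ?thesis unfolding H1_gr_deg_def H1_sl_K_def ker .
qed

end

theorem corollary2p5:
  fixes V :: "'a::comm_ring_1 set" and p :: nat
  assumes "free_Z_basis V"
    and "CARD('n::finite) \<ge> 2"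
    and "prime p"
  shows "(H1_gr_deg p 1 :: ('a ^ 'n ^ 'n) set set monoid)
            \<cong> (sl_K (FpV p :: 'a set ring) :: ('n \<Rightarrow> 'n \<Rightarrow> 'a set) monoid)
         \<and> (\<forall>i\<ge>2. (H1_gr_deg p i :: ('a ^ 'n ^ 'n) set set monoid)
            \<cong> (H1_sl_K (FpV p :: 'a set ring) :: ('n \<Rightarrow> 'n \<Rightarrow> 'a set) set monoid))"
proof -
  have p0: "p > 0" using assms(3) by (simp add: prime_gt_0_nat)
  interpret ctx p "of_nat p :: 'a"
    by unfold_locales (auto intro: free_cancel[OF assms(1) p0])
  show ?thesis using deg1 degi by blast
qed


end
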